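(* (i) ATE. Suppose that for some $C<\infty$, $q>2$, $(\mathbb{E}[|Y(z)|^q])^{1/q}\le C$ and $\mathbb{E}[Y(z)^2\mid X=x]\le C$ for $z=0,1$, all $x$, and let $e_1,\dots,e_T\in\mathcal{F}_\gamma$ for some $\gamma>0$, $e_0=\sum_t\kappa_te_t$. With $\tau_0(x)=m_0(1,x)-m_0(0,x)$, $\theta_{0,\mathrm{ATE}}=\mathbb{E}[Y(1)-Y(0)]$, define for a propensity $e$ $$V_{\mathrm{AIPW}}(e)=\mathbb{E}\Big[\frac{v_0(1,X)}{e(X)}+\frac{v_0(0,X)}{1-e(X)}+(\tau_0(X)-\theta_{0,\mathrm{ATE}})^2\Big],$$ $V_{0,\mathrm{AIPW}}=V_{\mathrm{AIPW}}(e_0)$, $V_{t,\mathrm{AIPW}}=V_{\mathrm{AIPW}}(e_t)$ and $V^{(\mathrm{LA})}_{\mathrm{AIPW}}=\big(\sum_{t=1}^T\kappa_tV_{t,\mathrm{AIPW}}^{-1}\big)^{-1}$. Then $V_{0,\mathrm{AIPW}}\le V^{(\mathrm{LA})}_{\mathrm{AIPW}}$. (ii) Partially linear model. Suppose in addition $\|\psi(x)\|\le C$ for all $x$, $v_0(z,x)\ge c>0$ for all $z,x$, $\mathbb{E}[Y(1)-Y(0)\mid X]=\psi(X)^\top\theta_{0,\mathrm{PL}}$, and let $e_1,\dots,e_T\in\mathcal{F}_0$ with $\mathbb{E}[e_0^2(X)(1-e_0(X))^2\psi(X)\psi(X)^\top]$ positive definite. For a propensity $e$ define $$V_{\mathrm{EPL}}(e)=\Big(\mathbb{E}\Big[\frac{e(X)(1-e(X))}{v_0(0,X)e(X)+v_0(1,X)(1-e(X))}\psi(X)\psi(X)^\top\Big]\Big)^{-1},$$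 $V_{0,\mathrm{EPL}}=V_{\mathrm{EPL}}(e_0)$, $V_{t,\mathrm{EPL}}=V_{\mathrm{EPL}}(e_t)$ and $V^{(\mathrm{LA})}_{\mathrm{EPL}}=\big(\sum_t\kappa_tV_{t,\mathrm{EPL}}^{-1}\big)^{-1}$. Then $V_{0,\mathrm{EPL}}\preceq V^{(\mathrm{LA})}_{\mathrm{EPL}}$ in the positive semidefinite order.
   Context: Setting: $T\ge2$ batches with $N_t/N\to\kappa_t\in(0,1)$, $\sum_t\kappa_t=1$. $(X,Y(0),Y(1))\sim P^S$, $X\in\mathcal{X}\subseteq\mathbb{R}^d$, expectations under $P^S$; $m_0(z,x)=\mathbb{E}[Y(z)\mid X=x]$, $v_0(z,x)=\mathrm{Var}(Y(z)\mid X=x)$; $\psi:\mathcal{X}\to\mathbb{R}^p$ known. $\mathcal{F}_\gamma$ is the set of measurable functions $\mathcal{X}\to[\gamma,1-\gamma]$. Interpretation: $V_{0,\cdot}$ is the asymptotic variance of the pooled oracle estimator in a non-adaptive batch experiment with propensities $e_1,\dots,e_T$, $V_{t,\cdot}$ that of the single-batch oracle estimator on batch $t$, and $V^{(\mathrm{LA})}$ that of the optimal inverse-variance-weighted linear aggregation of the single-batch estimators. In (i), the assumption $V_{t,\mathrm{AIPW}}$ scalar and positive; in (ii) each $V_{t,\mathrm{EPL}}^{-1}$ is the matrix inside the inverse. *)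

theory Defs
  imports "HOL-Analysis.Analysis" "HOL-Probability.Probability"
begin

definition sigmaX :: "'w measure \<Rightarrow> ('w \<Rightarrow> 'x::topological_space) \<Rightarrow> 'w measure" where
  "sigmaX M X = vimage_algebra (space M) X borel"

text \<open>g is a (Borel, everywhere defined) version of x |-> E[f | X = x]\<close>
definition cond_exp_version ::
  "'w measure \<Rightarrow> ('w \<Rightarrow> 'x::topological_space) \<Rightarrow> ('w \<Rightarrow> real) \<Rightarrow> ('x \<Rightarrow> real) \<Rightarrow> bool" where
  "cond_exp_version M X f g \<longleftrightarrow>
     g \<in> borel_measurable borel \<and>
     (AE w in M. g (X w) = real_cond_exp M (sigmaX M X) f w)"

definition Fgam :: "real \<Rightarrow> ('x::topological_space \<Rightarrow> real) set" where
  "Fgam \<gamma> = {e. e \<in> borel_measurable borel \<and> (\<forall>x. \<gamma> \<le> e x \<and> e x \<le> 1 - \<gamma>)}"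

definition theta_ATE :: "'w measure \<Rightarrow> (nat \<Rightarrow> 'w \<Rightarrow> real) \<Rightarrow> real" where
  "theta_ATE M Y = (\<integral>w. Y 1 w - Y 0 w \<partial>M)"

definition V_AIPW ::
  "'w measure \<Rightarrow> ('w \<Rightarrow> 'x) \<Rightarrow> (nat \<Rightarrow> 'w \<Rightarrow> real) \<Rightarrow> (nat \<Rightarrow> 'x \<Rightarrow> real)
     \<Rightarrow> (nat \<Rightarrow> 'x \<Rightarrow> real) \<Rightarrow> ('x \<Rightarrow> real) \<Rightarrow> real" where
  "V_AIPW M X Y m0 v0 e =
     (\<integral>w. v0 1 (X w) / e (X w) + v0 0 (X w) / (1 - e (X w))
          + (m0 1 (X w) - m0 0 (X w) - theta_ATE M Y)\<^sup>2 \<partial>M)"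

definition outer :: "real^'p \<Rightarrow> real^'p^'p" where
  "outer u = (\<chi> i j. u $ i * u $ j)"

definition EPL_info ::
  "'w measure \<Rightarrow> ('w \<Rightarrow> 'x) \<Rightarrow> (nat \<Rightarrow> 'x \<Rightarrow> real) \<Rightarrow> ('x \<Rightarrow> real^'p)
     \<Rightarrow> ('x \<Rightarrow> real) \<Rightarrow> real^'p^'p" where
  "EPL_info M X v0 \<psi> e =
     (\<integral>w. (e (X w) * (1 - e (X w))
            / (v0 0 (X w) * e (X w) + v0 1 (X w) * (1 - e (X w)))) *\<^sub>R outer (\<psi> (X w)) \<partial>M)"

definition V_EPL ::
  "'w measure \<Rightarrow> ('w \<Rightarrow> 'x) \<Rightarrow> (nat \<Rightarrow> 'x \<Rightarrow> real) \<Rightarrow> ('x \<Rightarrow> real^'p)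
     \<Rightarrow> ('x \<Rightarrow> real) \<Rightarrow> real^'p^'p" where
  "V_EPL M X v0 \<psi> e = matrix_inv (EPL_info M X v0 \<psi> e)"

definition pos_def_mat :: "real^'p^'p \<Rightarrow> bool" where
  "pos_def_mat A \<longleftrightarrow> (\<forall>x. x \<noteq> 0 \<longrightarrow> 0 < x \<bullet> (A *v x))"

definition psd_le :: "real^'p^'p \<Rightarrow> real^'p^'p \<Rightarrow> bool" where
  "psd_le A B \<longleftrightarrow> (\<forall>x. 0 \<le> x \<bullet> ((B - A) *v x))"

end

theory Submission
  imports Defs
begin


lemma cs_ineq:
  fixes p \<alpha> :: "nat \<Rightarrow> real"
  assumes fin: "finite I" and pos: "\<And>t. t \<in> I \<Longrightarrow> p t > 0" and s1: "sum \<alpha> I = 1"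
  shows "1 / sum p I \<le> (\<Sum>t\<in>I. \<alpha> t ^ 2 / p t)"
proof -
  have ne: "I \<noteq> {}" using s1 by auto
  define P where "P = sum p I"
  have P: "P > 0" unfolding P_def using fin ne pos by (simp add: sum_pos)
  have "0 \<le> (\<Sum>t\<in>I. (\<alpha> t - p t / P)^2 / p t)"
    by (intro sum_nonneg) (simp add: pos less_imp_le)
  also have "\<dots> = (\<Sum>t\<in>I. \<alpha> t ^ 2 / p t - 2 * \<alpha> t / P + p t / P^2)"
  proof (rule sum.cong)
    fix t assume "t \<in> I"
    then have "p t > 0" by (rule pos)
    then show "(\<alpha> t - p t / P)^2 / p t = \<alpha> t ^ 2 / p t - 2 * \<alpha> t / P + p t / P^2"
      using P by (simp add: field_simps power2_eq_square)
  qed simp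
  also have "\<dots> = (\<Sum>t\<in>I. \<alpha> t ^ 2 / p t) - 2 * sum \<alpha> I / P + sum p I / P^2"
    by (simp add: sum.distrib sum_subtractf sum_divide_distrib[symmetric] sum_distrib_left[symmetric])
  also have "\<dots> = (\<Sum>t\<in>I. \<alpha> t ^ 2 / p t) - 1 / P"
    using P s1 unfolding P_def[symmetric] by (simp add: field_simps power2_eq_square)
  finally show ?thesis unfolding P_def by simp
qed

definition gH :: "real \<Rightarrow> real \<Rightarrow> real \<Rightarrow> real" where
  "gH a b e = e * (1 - e) / (b * e + a * (1 - e))"

lemma gH_le_lin:
  assumes a: "a > 0" and b: "b > 0" and e: "0 \<le> e" "e \<le> 1"
  shows "gH a b e \<le> (1 - \<beta>)^2 * (e / a) + \<beta>^2 * ((1 - e) / b)"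
proof -
  define u v where "u = e / a" and "v = (1 - e) / b"
  have u: "u \<ge> 0" and v: "v \<ge> 0" using a b e by (auto simp: u_def v_def)
  have uv: "u + v > 0"
  proof (cases "e = 0")
    case True then show ?thesis using b by (simp add: u_def v_def)
  next
    case False then show ?thesis using a e v by (simp add: u_def add_pos_nonneg)
  qed
  have den: "b * e + a * (1 - e) = a * b * (u + v)" using a b by (simp add: u_def v_def field_simps)
  have gg: "gH a b e = u * v / (u + v)"
    unfolding gH_def den using a b by (simp add: u_def v_def field_simps)
  have "u * v \<le> ((1 - \<beta>)^2 * u + \<beta>^2 * v) * (u + v)"
  proof -
    have "((1 - \<beta>)^2 * u + \<beta>^2 * v) * (u + v) - u * v = ((1 - \<beta>) * u - \<beta> * v)^2"
      by (simp add: algebra_simps power2_eq_square)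
    then show ?thesis by (metis diff_ge_0_iff_ge zero_le_power2)
  qed
  then show ?thesis unfolding gg u_def[symmetric] v_def[symmetric] using uv
    by (simp add: divide_le_eq)
qed

lemma gH_eq_lin:
  assumes a: "a > 0" and b: "b > 0" and e: "0 \<le> e" "e \<le> 1"
    and that: "\<beta> = b * e / (b * e + a * (1 - e))"
  shows "gH a b e = (1 - \<beta>)^2 * (e / a) + \<beta>^2 * ((1 - e) / b)"
proof -
  have den: "b * e + a * (1 - e) > 0"
  proof (cases "e = 0")
    case True then show ?thesis using a by simp
  next
    case False then show ?thesis using a b e by (intro add_pos_nonneg) auto
  qed
  define D where "D = b * e + a * (1 - e)"
  have D: "D > 0" using den D_def by simp
  have b1: "1 - \<beta> = a * (1 - e) / D" using that D unfolding D_def by (simp add: field_simps)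
  have b2: "\<beta> = b * e / D" using that D_def by simp
  have "(1 - \<beta>)^2 * (e / a) + \<beta>^2 * ((1 - e) / b) = e * (1 - e) * (a * (1 - e) + b * e) / D^2"
  proof -
    have t1: "(a * (1 - e) / D)^2 * (e / a) = a * (1 - e)^2 * e / D^2"
      using a D by (simp add: power2_eq_square field_simps)
    have t2: "(b * e / D)^2 * ((1 - e) / b) = b * e^2 * (1 - e) / D^2"
      using b D by (simp add: power2_eq_square field_simps)
    have h1: "(1 - \<beta>)^2 * (e / a) = a * (1 - e)^2 * e / D^2" using b1 t1 by simp
    have h2: "\<beta>^2 * ((1 - e) / b) = b * e^2 * (1 - e) / D^2" using b2 t2 by simp
    have h3: "a * (1 - e)^2 * e + b * e^2 * (1 - e) = e * (1 - e) * (a * (1 - e) + b * e)"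
      by (simp add: power2_eq_square algebra_simps)
    show ?thesis by (simp only: h1 h2 add_divide_distrib[symmetric] h3)
  qed
  also have "\<dots> = e * (1 - e) / D"
  proof -
    have K: "a * (1 - e) + b * e = D" unfolding D_def by simp
    show ?thesis unfolding K using D by (simp add: power2_eq_square)
  qed
  finally show ?thesis unfolding gH_def D_def by simp
qed

lemma gH_concave:
  fixes \<kappa> ee :: "nat \<Rightarrow> real"
  assumes fin: "finite I" and a: "a > 0" and b: "b > 0"
    and k: "\<And>t. t \<in> I \<Longrightarrow> \<kappa> t \<ge> 0" and ks: "sum \<kappa> I = 1"
    and e: "\<And>t. t \<in> I \<Longrightarrow> 0 \<le> ee t \<and> ee t \<le> 1"
  shows "(\<Sum>t\<in>I. \<kappa> t * gH a b (ee t)) \<le> gH a b (\<Sum>t\<in>I. \<kappa> t * ee t)"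
proof -
  define E where "E = (\<Sum>t\<in>I. \<kappa> t * ee t)"
  have E0: "0 \<le> E" unfolding E_def using k e by (auto intro!: sum_nonneg)
  have "E \<le> (\<Sum>t\<in>I. \<kappa> t * 1)" unfolding E_def using k e by (intro sum_mono mult_left_mono) auto
  then have E1: "E \<le> 1" using ks by simp
  define \<beta> where "\<beta> = b * E / (b * E + a * (1 - E))"
  have "(\<Sum>t\<in>I. \<kappa> t * gH a b (ee t)) \<le> (\<Sum>t\<in>I. \<kappa> t * ((1 - \<beta>)^2 * (ee t / a) + \<beta>^2 * ((1 - ee t) / b)))"
    using k e a b by (intro sum_mono mult_left_mono gH_le_lin) auto
  also have "\<dots> = (1 - \<beta>)^2 / a * E + \<beta>^2 / b * (\<Sum>t\<in>I. \<kappa> t - \<kappa> t * ee t)"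
    unfolding E_def sum_distrib_left sum.distrib[symmetric]
    by (intro sum.cong) (auto simp: field_simps)
  also have "\<dots> = (1 - \<beta>)^2 * (E / a) + \<beta>^2 * ((1 - E) / b)"
    using ks unfolding E_def by (simp add: sum_subtractf)
  also have "\<dots> = gH a b E" using gH_eq_lin[OF a b E0 E1 \<beta>_def] by simp
  finally show ?thesis unfolding E_def .
qed



lemma inv_props:
  fixes A :: "real^'n^'n"
  assumes "invertible A"
  shows "A ** matrix_inv A = mat 1 \<and> matrix_inv A ** A = mat 1"
  using assms unfolding invertible_def matrix_inv_def by (rule someI_ex)

lemma inv_mv:
  fixes A :: "real^'n^'n"
  assumes "invertible A"
  shows "A *v (matrix_inv A *v x) = x" "matrix_inv A *v (A *v x) = x"
  using inv_props[OF assms] by (simp_all add: matrix_vector_mul_assoc)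

lemma outer_mv: "outer u *v z = (u \<bullet> z) *\<^sub>R u"
  unfolding outer_def
  by (simp add: vec_eq_iff matrix_vector_mult_def inner_vec_def sum_distrib_left algebra_simps)

lemma outer_qf: "y \<bullet> (outer u *v z) = (u \<bullet> y) * (u \<bullet> z)"
  unfolding outer_mv by (simp add: inner_commute)

lemma norm_outer: "norm (outer (u::real^'p)) \<le> real CARD('p) * (norm u)^2"
proof -
  have "norm (outer u) \<le> (\<Sum>i\<in>UNIV. norm (outer u $ i))"
    unfolding norm_vec_def[of "outer u"] by (rule L2_set_le_sum) simp
  also have "\<dots> \<le> (\<Sum>i\<in>(UNIV::'p set). (norm u)^2)"
  proof (rule sum_mono)
    fix i
    have "outer u $ i = (u $ i) *\<^sub>R u" unfolding outer_def by (simp add: vec_eq_iff)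
    then have "norm (outer u $ i) = \<bar>u $ i\<bar> * norm u" by simp
    also have "\<dots> \<le> norm u * norm u" by (intro mult_right_mono component_le_norm_cart) simp
    finally show "norm (outer u $ i) \<le> (norm u)^2" by (simp add: power2_eq_square)
  qed
  finally show ?thesis by simp
qed

lemma bl_qf: "bounded_linear (\<lambda>A::real^'n^'m. y \<bullet> (A *v z))"
proof -
  have "linear (\<lambda>A::real^'n^'m. y \<bullet> (A *v z))"
    by (rule linearI) (simp_all add: matrix_vector_mult_add_rdistrib inner_add_right
        scaleR_matrix_vector_assoc[symmetric])
  then show ?thesis by (simp add: linear_conv_bounded_linear)
qed

lemma psd_pd:
  fixes B :: "real^'n^'n"
  assumes sym: "\<And>y z. y \<bullet> (B *v z) = z \<bullet> (B *v y)"
    and psd: "\<And>y. 0 \<le> y \<bullet> (B *v y)"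
    and y0: "y \<bullet> (B *v y) = 0"
  shows "B *v y = 0"
proof (rule ccontr)
  assume ne: "B *v y \<noteq> 0"
  define u where "u = B *v y"
  define N where "N = u \<bullet> u"
  define K where "K = u \<bullet> (B *v u)"
  have N: "N > 0" using ne unfolding N_def u_def by simp
  have K: "K \<ge> 0" unfolding K_def by (rule psd)
  define s where "s = N / (K + 1)"
  have s: "s > 0" using N K unfolding s_def by simp
  have "0 \<le> (y - s *\<^sub>R u) \<bullet> (B *v (y - s *\<^sub>R u))" by (rule psd)
  also have "\<dots> = y \<bullet> (B *v y) - s * (y \<bullet> (B *v u)) - s * (u \<bullet> (B *v y)) + s * s * K"
    unfolding K_def
    by (simp add: matrix_vector_mult_diff_distrib matrix_vector_mult_scaleR inner_diff_left
        inner_diff_right algebra_simps)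
  also have "\<dots> = - 2 * s * N + s * s * K"
    using y0 sym[of y u] unfolding N_def u_def by simp
  finally have "2 * s * N \<le> s * s * K" by simp
  then have "2 * N \<le> s * K" using s by (simp add: power2_eq_square mult.assoc)
  also have "s * K = N * (K / (K + 1))" unfolding s_def by simp
  also have "\<dots> < N * 1" using N K by (intro mult_strict_left_mono) auto
  finally show False using N by simp
qed

lemma inv_mono:
  fixes A B :: "real^'n^'n"
  assumes sym: "\<And>y z. y \<bullet> (B *v z) = z \<bullet> (B *v y)"
    and psd: "\<And>y. 0 \<le> y \<bullet> (B *v y)"
    and invB: "invertible B"
    and le: "\<And>y. y \<bullet> (B *v y) \<le> y \<bullet> (A *v y)"
  shows "invertible A" "psd_le (matrix_inv A) (matrix_inv B)"
proof -
  have inj: "A *v y = 0 \<Longrightarrow> y = 0" for y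
  proof -
    assume "A *v y = 0"
    then have "y \<bullet> (B *v y) \<le> 0" using le[of y] by simp
    then have "y \<bullet> (B *v y) = 0" using psd[of y] by simp
    then have "B *v y = 0" by (rule psd_pd[OF sym psd])
    then show "y = 0" using inv_mv(2)[OF invB, of y] by simp
  qed
  show invA: "invertible A"
    unfolding invertible_left_inverse matrix_left_invertible_ker using inj by blast
  show "psd_le (matrix_inv A) (matrix_inv B)"
    unfolding psd_le_def
  proof
    fix x
    have Bb: "2 * (x \<bullet> y) - y \<bullet> (B *v y) \<le> x \<bullet> (matrix_inv B *v x)" for y
    proof -
      define z where "z = matrix_inv B *v x"
      have Bz: "B *v z = x" unfolding z_def by (rule inv_mv(1)[OF invB])
      have "0 \<le> (y - z) \<bullet> (B *v (y - z))" by (rule psd)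
      also have "\<dots> = y \<bullet> (B *v y) - y \<bullet> (B *v z) - z \<bullet> (B *v y) + z \<bullet> (B *v z)"
        by (simp add: matrix_vector_mult_diff_distrib inner_diff_left inner_diff_right algebra_simps)
      also have "\<dots> = y \<bullet> (B *v y) - 2 * (x \<bullet> y) + x \<bullet> z"
        using sym[of z y] Bz by (simp add: inner_commute)
      finally show ?thesis unfolding z_def by simp
    qed
    define yA where "yA = matrix_inv A *v x"
    have AyA: "A *v yA = x" unfolding yA_def by (rule inv_mv(1)[OF invA])
    have "x \<bullet> (matrix_inv A *v x) = 2 * (x \<bullet> yA) - yA \<bullet> (A *v yA)"
      using AyA unfolding yA_def by (simp add: inner_commute)
    also have "\<dots> \<le> 2 * (x \<bullet> yA) - yA \<bullet> (B *v yA)" using le[of yA] by simp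
    also have "\<dots> \<le> x \<bullet> (matrix_inv B *v x)" by (rule Bb)
    finally show "0 \<le> x \<bullet> ((matrix_inv B - matrix_inv A) *v x)"
      by (simp add: matrix_vector_mult_diff_rdistrib inner_diff_right)
  qed
qed



lemma part1:
  fixes M :: "'w measure" and a b c :: "'w \<Rightarrow> real" and E :: "nat \<Rightarrow> 'w \<Rightarrow> real"
    and \<kappa> :: "nat \<Rightarrow> real" and I :: "nat set"
  assumes fin: "finite I" and kpos: "\<And>t. t \<in> I \<Longrightarrow> 0 < \<kappa> t" and ks: "sum \<kappa> I = 1"
    and a: "AE w in M. 0 \<le> a w" and b: "AE w in M. 0 \<le> b w" and c: "\<And>w. 0 \<le> c w"
    and g: "\<gamma> > 0" and E: "\<And>t w. t \<in> I \<Longrightarrow> \<gamma> \<le> E t w \<and> E t w \<le> 1 - \<gamma>"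
    and Vpos: "\<And>t. t \<in> I \<Longrightarrow> 0 < (\<integral>w. a w / E t w + b w / (1 - E t w) + c w \<partial>M)"
  shows "(\<integral>w. a w / (\<Sum>t\<in>I. \<kappa> t * E t w) + b w / (1 - (\<Sum>t\<in>I. \<kappa> t * E t w)) + c w \<partial>M)
     \<le> inverse (\<Sum>t\<in>I. \<kappa> t * inverse (\<integral>w. a w / E t w + b w / (1 - E t w) + c w \<partial>M))"
proof -
  define H where "H t w = a w / E t w + b w / (1 - E t w) + c w" for t w
  define V where "V t = integral\<^sup>L M (H t)" for t
  define H0 where "H0 w = a w / (\<Sum>t\<in>I. \<kappa> t * E t w) + b w / (1 - (\<Sum>t\<in>I. \<kappa> t * E t w)) + c w" for w
  have Vp: "t \<in> I \<Longrightarrow> V t > 0" for t using Vpos unfolding V_def H_def by simp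
  have intH: "t \<in> I \<Longrightarrow> integrable M (H t)" for t
    using Vp[of t] not_integrable_integral_eq[of M "H t"] unfolding V_def by force
  define S where "S = (\<Sum>t\<in>I. \<kappa> t * inverse (V t))"
  have ne: "I \<noteq> {}" using ks by auto
  have S: "S > 0" unfolding S_def using fin ne kpos Vp by (intro sum_pos) auto
  define \<alpha> where "\<alpha> t = \<kappa> t * inverse (V t) / S" for t
  have sa: "sum \<alpha> I = 1" unfolding \<alpha>_def using S by (simp add: sum_divide_distrib[symmetric] S_def)
  define \<beta> where "\<beta> t = \<alpha> t ^ 2 / \<kappa> t" for t
  have cs: "1 / sum p I \<le> (\<Sum>t\<in>I. \<beta> t / q t)"
    if pq: "\<And>t. t \<in> I \<Longrightarrow> p t = \<kappa> t * q t \<and> q t > 0" for p q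
  proof -
    have "1 / sum p I \<le> (\<Sum>t\<in>I. \<alpha> t ^ 2 / p t)"
      using pq kpos by (intro cs_ineq[OF fin _ sa]) auto
    also have "\<dots> = (\<Sum>t\<in>I. \<beta> t / q t)"
      using pq by (intro sum.cong) (auto simp: \<beta>_def)
    finally show ?thesis .
  qed
  have pw: "AE w in M. H0 w \<le> (\<Sum>t\<in>I. \<beta> t * H t w)"
    using a b
  proof eventually_elim
    case (elim w)
    have i1: "1 / (\<Sum>t\<in>I. \<kappa> t * E t w) \<le> (\<Sum>t\<in>I. \<beta> t / E t w)"
      using E g by (intro cs) (auto intro: less_le_trans[OF g])
    have "1 / (\<Sum>t\<in>I. \<kappa> t * (1 - E t w)) \<le> (\<Sum>t\<in>I. \<beta> t / (1 - E t w))"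
    proof (intro cs conjI refl)
      fix t assume "t \<in> I"
      then show "0 < 1 - E t w" using E[of t w] g by linarith
    qed
    moreover have "(\<Sum>t\<in>I. \<kappa> t * (1 - E t w)) = 1 - (\<Sum>t\<in>I. \<kappa> t * E t w)"
      using ks by (simp add: algebra_simps sum_subtractf)
    ultimately have i2: "1 / (1 - (\<Sum>t\<in>I. \<kappa> t * E t w)) \<le> (\<Sum>t\<in>I. \<beta> t / (1 - E t w))" by simp
    have "1 / sum \<kappa> I \<le> (\<Sum>t\<in>I. \<beta> t / 1)"
      using kpos by (intro cs) auto
    then have i3: "1 \<le> (\<Sum>t\<in>I. \<beta> t)" using ks by simp
    have "H0 w = a w * (1 / (\<Sum>t\<in>I. \<kappa> t * E t w)) + b w * (1 / (1 - (\<Sum>t\<in>I. \<kappa> t * E t w))) + c w * 1"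
      unfolding H0_def by simp
    also have "\<dots> \<le> a w * (\<Sum>t\<in>I. \<beta> t / E t w) + b w * (\<Sum>t\<in>I. \<beta> t / (1 - E t w)) + c w * (\<Sum>t\<in>I. \<beta> t)"
      using elim c[of w] i1 i2 i3 by (intro add_mono mult_left_mono) auto
    also have "\<dots> = (\<Sum>t\<in>I. \<beta> t * H t w)"
      unfolding H_def by (simp add: sum_distrib_left sum_distrib_right sum.distrib algebra_simps)
    finally show ?case .
  qed
  have "integral\<^sup>L M H0 \<le> inverse S"
  proof (cases "integrable M H0")
    case False then show ?thesis using S by (simp add: not_integrable_integral_eq)
  next
    case True
    have "integral\<^sup>L M H0 \<le> (\<integral>w. (\<Sum>t\<in>I. \<beta> t * H t w) \<partial>M)"
      using True intH pw by (intro integral_mono_AE) auto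
    also have "\<dots> = (\<Sum>t\<in>I. \<beta> t * V t)"
      using intH unfolding V_def by (simp add: integral_sum)
    also have "\<dots> = (\<Sum>t\<in>I. \<kappa> t * inverse (V t)) / S^2"
      unfolding sum_divide_distrib
    proof (intro sum.cong refl)
      fix t assume t: "t \<in> I"
      show "\<beta> t * V t = \<kappa> t * inverse (V t) / S^2"
        using kpos[OF t] Vp[OF t] S unfolding \<beta>_def \<alpha>_def
        by (simp add: field_simps power2_eq_square)
    qed
    also have "\<dots> = inverse S" unfolding S_def[symmetric] using S
      by (simp add: power2_eq_square field_simps)
    finally show ?thesis .
  qed
  then show ?thesis unfolding H0_def S_def V_def H_def .
qed



lemma gH_bounds:
  assumes "c > 0" "c \<le> a" "c \<le> b" "0 \<le> e" "e \<le> 1"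
  shows "0 \<le> gH a b e \<and> gH a b e \<le> 1 / c"
proof -
  have den: "c \<le> b * e + a * (1 - e)"
  proof -
    have "c = c * e + c * (1 - e)" by (simp add: algebra_simps)
    also have "\<dots> \<le> b * e + a * (1 - e)" using assms by (intro add_mono mult_right_mono) auto
    finally show ?thesis .
  qed
  have num: "0 \<le> e * (1 - e)" "e * (1 - e) \<le> 1" using assms by (auto simp: mult_le_one)
  have "gH a b e \<le> 1 / (b * e + a * (1 - e))" unfolding gH_def using num den assms
    by (intro divide_right_mono) auto
  also have "\<dots> \<le> 1 / c" using den assms by (intro divide_left_mono) auto
  finally show ?thesis unfolding gH_def using num den assms by auto
qed

lemma part2:
  fixes M :: "'w measure" and a b :: "'w \<Rightarrow> real" and E :: "nat \<Rightarrow> 'w \<Rightarrow> real"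
    and P :: "'w \<Rightarrow> real^'p" and \<kappa> :: "nat \<Rightarrow> real" and I :: "nat set"
  assumes ps: "prob_space M"
    and fin: "finite I" and kpos: "\<And>t. t \<in> I \<Longrightarrow> 0 < \<kappa> t" and ks: "sum \<kappa> I = 1"
    and am[measurable]: "a \<in> borel_measurable M" and bm[measurable]: "b \<in> borel_measurable M"
    and Em: "\<And>t. t \<in> I \<Longrightarrow> E t \<in> borel_measurable M"
    and c: "c > 0" "\<And>w. c \<le> a w" "\<And>w. c \<le> b w"
    and E01: "\<And>t w. t \<in> I \<Longrightarrow> 0 \<le> E t w \<and> E t w \<le> 1"
    and Pb: "\<And>w. norm (P w) \<le> C"
    and pd: "pos_def_mat (\<integral>w. ((\<Sum>t\<in>I. \<kappa> t * E t w)\<^sup>2 * (1 - (\<Sum>t\<in>I. \<kappa> t * E t w))\<^sup>2) *\<^sub>R outer (P w) \<partial>M)"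
    and inv: "invertible (\<Sum>t\<in>I. \<kappa> t *\<^sub>R (\<integral>w. gH (a w) (b w) (E t w) *\<^sub>R outer (P w) \<partial>M))"
  shows "psd_le (matrix_inv (\<integral>w. gH (a w) (b w) (\<Sum>t\<in>I. \<kappa> t * E t w) *\<^sub>R outer (P w) \<partial>M))
                (matrix_inv (\<Sum>t\<in>I. \<kappa> t *\<^sub>R (\<integral>w. gH (a w) (b w) (E t w) *\<^sub>R outer (P w) \<partial>M)))"
proof -
  interpret prob_space M by (rule ps)
  define E0 where "E0 w = (\<Sum>t\<in>I. \<kappa> t * E t w)" for w
  define D where "D w = (E0 w)\<^sup>2 * (1 - E0 w)\<^sup>2" for w
  define F where "F t w = gH (a w) (b w) (E t w)" for t w
  define F0 where "F0 w = gH (a w) (b w) (E0 w)" for w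
  define G where "G w = (\<Sum>t\<in>I. \<kappa> t * F t w)" for w
  define Ou where "Ou w = outer (P w)" for w
  have E0m[measurable]: "E0 \<in> borel_measurable M" unfolding E0_def using Em by measurable
  have E001: "0 \<le> E0 w \<and> E0 w \<le> 1" for w
  proof -
    have "0 \<le> E0 w" unfolding E0_def using E01 kpos by (intro sum_nonneg) (simp add: less_imp_le)
    moreover have "E0 w \<le> (\<Sum>t\<in>I. \<kappa> t * 1)" unfolding E0_def using E01 kpos
      by (intro sum_mono mult_left_mono) (auto simp: less_imp_le)
    ultimately show ?thesis using ks by simp
  qed
  have intD: "integrable M (\<lambda>w. D w *\<^sub>R Ou w)"
  proof (rule ccontr)
    assume "\<not> ?thesis"
    then have "(\<integral>w. D w *\<^sub>R Ou w \<partial>M) = 0" by (rule not_integrable_integral_eq)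
    then show False using pd[unfolded pos_def_mat_def, rule_format, of 1]
      unfolding D_def Ou_def E0_def by simp
  qed
  have Dm[measurable]: "D \<in> borel_measurable M" unfolding D_def by measurable
  have DOm[measurable]: "(\<lambda>w. D w *\<^sub>R Ou w) \<in> borel_measurable M" using intD by measurable
  have zero: "D w = 0 \<Longrightarrow> t \<in> I \<Longrightarrow> F t w = 0" "D w = 0 \<Longrightarrow> F0 w = 0" for t w
  proof -
    assume "D w = 0"
    then have "E0 w = 0 \<or> E0 w = 1" unfolding D_def by simp
    then have all: "\<forall>t\<in>I. E t w * (1 - E t w) = 0"
    proof
      assume "E0 w = 0"
      then have "\<forall>t\<in>I. \<kappa> t * E t w = 0" unfolding E0_def using fin E01 kpos
        by (subst sum_nonneg_eq_0_iff[symmetric]) (auto simp: less_imp_le)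
      then show ?thesis using kpos by (metis less_irrefl mult_eq_0_iff mult_zero_left)
    next
      assume "E0 w = 1"
      then have "(\<Sum>t\<in>I. \<kappa> t * (1 - E t w)) = 0" unfolding E0_def using ks
        by (simp add: algebra_simps sum_subtractf)
      then have "\<forall>t\<in>I. \<kappa> t * (1 - E t w) = 0" using fin E01 kpos
        by (subst sum_nonneg_eq_0_iff[symmetric]) (auto simp: less_imp_le)
      then show ?thesis using kpos by (metis less_irrefl mult_eq_0_iff mult_zero_right)
    qed
    show "t \<in> I \<Longrightarrow> F t w = 0" using all unfolding F_def gH_def by simp
    show "F0 w = 0" using \<open>E0 w = 0 \<or> E0 w = 1\<close> unfolding F0_def gH_def by auto
  qed
  have integ: "integrable M (\<lambda>w. H w *\<^sub>R Ou w)"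
    if Hm: "H \<in> borel_measurable M" and Hz: "\<And>w. D w = 0 \<Longrightarrow> H w = 0"
      and Hb: "\<And>w. \<bar>H w\<bar> \<le> K" for H K
  proof (rule integrable_const_bound[where B = "K * (real CARD('p) * C\<^sup>2)"])
    have eq: "(\<lambda>w. H w *\<^sub>R Ou w) = (\<lambda>w. (H w / D w) *\<^sub>R (D w *\<^sub>R Ou w))"
      using Hz by (auto intro!: ext)
    show "(\<lambda>w. H w *\<^sub>R Ou w) \<in> borel_measurable M" unfolding eq
      by (rule borel_measurable_scaleR[OF borel_measurable_divide[OF Hm Dm] DOm])
    show "AE w in M. norm (H w *\<^sub>R Ou w) \<le> K * (real CARD('p) * C\<^sup>2)"
    proof (intro AE_I2)
      fix w
      have C: "0 \<le> C" using Pb[of w] norm_ge_zero order_trans by blast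
      have "norm (Ou w) \<le> real CARD('p) * (norm (P w))\<^sup>2" unfolding Ou_def by (rule norm_outer)
      also have "\<dots> \<le> real CARD('p) * C\<^sup>2"
        using Pb[of w] by (intro mult_left_mono power_mono) auto
      finally have "norm (Ou w) \<le> real CARD('p) * C\<^sup>2" .
      then show "norm (H w *\<^sub>R Ou w) \<le> K * (real CARD('p) * C\<^sup>2)"
        using Hb[of w] by (simp add: mult_mono')
    qed
  qed
  have Fm: "F t \<in> borel_measurable M" if t: "t \<in> I" for t
  proof -
    have [measurable]: "E t \<in> borel_measurable M" using Em[OF t] .
    show ?thesis unfolding F_def gH_def by measurable
  qed
  have F0m: "F0 \<in> borel_measurable M" unfolding F0_def gH_def by measurable
  have Gm: "G \<in> borel_measurable M" unfolding G_def using Fm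
    by (intro borel_measurable_sum borel_measurable_times borel_measurable_const) auto
  have Fb: "t \<in> I \<Longrightarrow> 0 \<le> F t w \<and> F t w \<le> 1 / c" for t w
    unfolding F_def using c E01 by (intro gH_bounds) auto
  have F0b: "0 \<le> F0 w \<and> F0 w \<le> 1 / c" for w
    unfolding F0_def using c E001 by (intro gH_bounds) auto
  have Gb: "0 \<le> G w \<and> G w \<le> 1 / c" for w
  proof -
    have g0: "0 \<le> G w" unfolding G_def using Fb kpos by (intro sum_nonneg) (simp add: less_imp_le)
    have "G w \<le> (\<Sum>t\<in>I. \<kappa> t * (1 / c))" unfolding G_def using Fb kpos
      by (intro sum_mono mult_left_mono) (auto simp: less_imp_le)
    also have "(\<Sum>t\<in>I. \<kappa> t * (1 / c)) = 1 / c" using ks by (simp add: sum_divide_distrib[symmetric])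
    finally show ?thesis using g0 by simp
  qed
  have intF: "t \<in> I \<Longrightarrow> integrable M (\<lambda>w. F t w *\<^sub>R Ou w)" for t
    using Fm zero(1) Fb by (intro integ[of "F t" "1 / c"]) (auto simp: abs_le_iff)
  have intF0: "integrable M (\<lambda>w. F0 w *\<^sub>R Ou w)"
    using F0m zero(2) F0b by (intro integ[of F0 "1 / c"]) (auto simp: abs_le_iff)
  have intG: "integrable M (\<lambda>w. G w *\<^sub>R Ou w)"
    using Gm zero(1) Gb by (intro integ[of G "1 / c"]) (auto simp: abs_le_iff G_def)
  have Beq: "(\<Sum>t\<in>I. \<kappa> t *\<^sub>R (\<integral>w. F t w *\<^sub>R Ou w \<partial>M)) = (\<integral>w. G w *\<^sub>R Ou w \<partial>M)"
  proof -
    have "(\<Sum>t\<in>I. \<kappa> t *\<^sub>R (\<integral>w. F t w *\<^sub>R Ou w \<partial>M)) = (\<Sum>t\<in>I. (\<integral>w. \<kappa> t *\<^sub>R (F t w *\<^sub>R Ou w) \<partial>M))"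
      by (simp only: integral_scaleR_right)
    also have "\<dots> = (\<integral>w. (\<Sum>t\<in>I. \<kappa> t *\<^sub>R (F t w *\<^sub>R Ou w)) \<partial>M)"
    proof -
      have "\<And>t. t \<in> I \<Longrightarrow> integrable M (\<lambda>w. \<kappa> t *\<^sub>R (F t w *\<^sub>R Ou w))"
        by (rule integrable_scaleR_right, rule intF)
      then show ?thesis by (rule Bochner_Integration.integral_sum[symmetric])
    qed
    also have "\<dots> = (\<integral>w. G w *\<^sub>R Ou w \<partial>M)"
      unfolding G_def by (simp add: scaleR_sum_left)
    finally show ?thesis .
  qed
  have qf: "y \<bullet> ((\<integral>w. H w *\<^sub>R Ou w \<partial>M) *v z) = (\<integral>w. H w * ((P w \<bullet> y) * (P w \<bullet> z)) \<partial>M)"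
    and qfi: "integrable M (\<lambda>w. H w * ((P w \<bullet> y) * (P w \<bullet> z)))"
    if iH: "integrable M (\<lambda>w. H w *\<^sub>R Ou w)" for H y z
  proof -
    have eq: "(\<lambda>w. y \<bullet> ((H w *\<^sub>R Ou w) *v z)) = (\<lambda>w. H w * ((P w \<bullet> y) * (P w \<bullet> z)))"
      unfolding Ou_def by (auto simp: scaleR_matrix_vector_assoc[symmetric] outer_qf)
    show "y \<bullet> ((\<integral>w. H w *\<^sub>R Ou w \<partial>M) *v z) = (\<integral>w. H w * ((P w \<bullet> y) * (P w \<bullet> z)) \<partial>M)"
      using integral_bounded_linear[OF bl_qf iH, of y z] unfolding eq by simp
    show "integrable M (\<lambda>w. H w * ((P w \<bullet> y) * (P w \<bullet> z)))"
      using integrable_bounded_linear[OF bl_qf iH, of y z] unfolding eq .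
  qed
  define A where "A = (\<integral>w. F0 w *\<^sub>R Ou w \<partial>M)"
  define B where "B = (\<integral>w. G w *\<^sub>R Ou w \<partial>M)"
  have s1: "y \<bullet> (B *v z) = z \<bullet> (B *v y)" for y z
      unfolding B_def qf[OF intG] by (simp add: algebra_simps)
  have s2: "0 \<le> y \<bullet> (B *v y)" for y
      unfolding B_def qf[OF intG] using Gb by (intro Bochner_Integration.integral_nonneg) simp
  have s3: "invertible B" using inv unfolding B_def Beq[symmetric] unfolding F_def Ou_def .
  have s4: "y \<bullet> (B *v y) \<le> y \<bullet> (A *v y)" for y
      unfolding A_def B_def qf[OF intG] qf[OF intF0]
    proof (rule Bochner_Integration.integral_mono[OF qfi[OF intG] qfi[OF intF0]])
      fix w
      have "G w \<le> F0 w" unfolding G_def F_def F0_def E0_def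
        using c E01 kpos fin ks less_le_trans[OF c(1) c(2)] less_le_trans[OF c(1) c(3)]
        by (intro gH_concave) (auto simp: less_imp_le)
      then show "G w * (P w \<bullet> y * (P w \<bullet> y)) \<le> F0 w * (P w \<bullet> y * (P w \<bullet> y))"
        by (intro mult_right_mono) auto
    qed
  have "psd_le (matrix_inv A) (matrix_inv B)" by (rule inv_mono(2)[OF s1 s2 s3 s4])
  then show ?thesis unfolding A_def B_def Beq[symmetric] unfolding F_def F0_def Ou_def E0_def .
qed


theorem theorem1:
  fixes M :: "'w measure"
    and X :: "'w \<Rightarrow> real^'d"
    and Y :: "nat \<Rightarrow> 'w \<Rightarrow> real"
    and m0 v0 s0 :: "nat \<Rightarrow> real^'d \<Rightarrow> real"
    and \<psi> :: "real^'d \<Rightarrow> real^'p"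
    and T :: nat and \<kappa> :: "nat \<Rightarrow> real"
    and e :: "nat \<Rightarrow> real^'d \<Rightarrow> real"
    and C q :: real
  defines "e0 \<equiv> (\<lambda>x. \<Sum>t\<in>{1..T}. \<kappa> t * e t x)"
  assumes "prob_space M"
    and "X \<in> borel_measurable M"
    and "\<And>z. z \<in> {0, 1} \<Longrightarrow> Y z \<in> borel_measurable M"
    and "T \<ge> 2"
    and "\<And>t. t \<in> {1..T} \<Longrightarrow> 0 < \<kappa> t \<and> \<kappa> t < 1"
    and "(\<Sum>t\<in>{1..T}. \<kappa> t) = 1"
    \<comment> \<open>m0, v0 are versions of E[Y(z)|X=x], Var(Y(z)|X=x); s0 of E[Y(z)^2|X=x]\<close>
    and "\<And>z. z \<in> {0, 1} \<Longrightarrow> cond_exp_version M X (Y z) (m0 z)"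
    and "\<And>z. z \<in> {0, 1} \<Longrightarrow>
           cond_exp_version M X (\<lambda>w. (Y z w - m0 z (X w))\<^sup>2) (v0 z)"
    and "\<And>z. z \<in> {0, 1} \<Longrightarrow> cond_exp_version M X (\<lambda>w. (Y z w)\<^sup>2) (s0 z)"
    and "q > 2"
    and "\<And>z. z \<in> {0, 1} \<Longrightarrow> integrable M (\<lambda>w. \<bar>Y z w\<bar> powr q)"
    and "\<And>z. z \<in> {0, 1} \<Longrightarrow> (\<integral>w. \<bar>Y z w\<bar> powr q \<partial>M) powr (1 / q) \<le> C"
    and "\<And>z x. z \<in> {0, 1} \<Longrightarrow> s0 z x \<le> C"
  shows
    "(\<forall>\<gamma>>0. (\<forall>t\<in>{1..T}. e t \<in> Fgam \<gamma>)
        \<and> (\<forall>t\<in>{1..T}. 0 < V_AIPW M X Y m0 v0 (e t))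
        \<longrightarrow> V_AIPW M X Y m0 v0 e0
            \<le> inverse (\<Sum>t\<in>{1..T}. \<kappa> t * inverse (V_AIPW M X Y m0 v0 (e t))))
     \<and>
     (\<forall>c (\<theta>::real^'p).
        (\<forall>x. norm (\<psi> x) \<le> C)
        \<and> c > 0 \<and> (\<forall>z\<in>{0, 1}. \<forall>x. c \<le> v0 z x)
        \<and> cond_exp_version M X (\<lambda>w. Y 1 w - Y 0 w) (\<lambda>x. \<psi> x \<bullet> \<theta>)
        \<and> (\<forall>t\<in>{1..T}. e t \<in> Fgam 0)
        \<and> pos_def_mat (\<integral>w. ((e0 (X w))\<^sup>2 * (1 - e0 (X w))\<^sup>2) *\<^sub>R outer (\<psi> (X w)) \<partial>M)
        \<and> invertible (\<Sum>t\<in>{1..T}. \<kappa> t *\<^sub>R EPL_info M X v0 \<psi> (e t))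
        \<longrightarrow> psd_le (V_EPL M X v0 \<psi> e0)
                   (matrix_inv (\<Sum>t\<in>{1..T}. \<kappa> t *\<^sub>R EPL_info M X v0 \<psi> (e t))))"
proof -
  interpret prob_space M by (rule assms(2))
  have Xm[measurable]: "X \<in> borel_measurable M" by (rule assms(3))
  have sub: "subalgebra M (sigmaX M X)"
    unfolding subalgebra_def sigmaX_def using sets_image_in_sets[of M "space M" X borel] Xm by simp
  have "finite_measure_subalgebra M (sigmaX M X)"
    by (intro finite_measure_subalgebra.intro finite_measure_subalgebra_axioms.intro sub)
      (rule finite_measure_axioms)
  then have sf: "sigma_finite_subalgebra M (sigmaX M X)"
    by (rule finite_measure_subalgebra_is_sigma_finite)
  have vnn: "AE w in M. 0 \<le> v0 z (X w)" if z: "z \<in> {0, 1}" for z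
  proof -
    have m0m[measurable]: "m0 z \<in> borel_measurable borel"
      using assms(8)[OF z] unfolding cond_exp_version_def by simp
    have Ym[measurable]: "Y z \<in> borel_measurable M" using assms(4)[OF z] .
    have cv: "AE w in M. v0 z (X w) = real_cond_exp M (sigmaX M X) (\<lambda>w. (Y z w - m0 z (X w))\<^sup>2) w"
      using assms(9)[OF z] unfolding cond_exp_version_def by simp
    have "AE w in M. 0 \<le> real_cond_exp M (sigmaX M X) (\<lambda>w. (Y z w - m0 z (X w))\<^sup>2) w"
      by (rule sigma_finite_subalgebra.real_cond_exp_pos[OF sf]) auto
    with cv show ?thesis by eventually_elim simp
  qed
  have part_i: "(\<forall>t\<in>{1..T}. e t \<in> Fgam \<gamma>)
        \<and> (\<forall>t\<in>{1..T}. 0 < V_AIPW M X Y m0 v0 (e t))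
        \<longrightarrow> V_AIPW M X Y m0 v0 e0
            \<le> inverse (\<Sum>t\<in>{1..T}. \<kappa> t * inverse (V_AIPW M X Y m0 v0 (e t)))"
    if g: "\<gamma> > 0" for \<gamma>
  proof (intro impI, elim conjE)
    assume F: "\<forall>t\<in>{1..T}. e t \<in> Fgam \<gamma>" and V: "\<forall>t\<in>{1..T}. 0 < V_AIPW M X Y m0 v0 (e t)"
    show "V_AIPW M X Y m0 v0 e0
            \<le> inverse (\<Sum>t\<in>{1..T}. \<kappa> t * inverse (V_AIPW M X Y m0 v0 (e t)))"
      unfolding V_AIPW_def e0_def
    proof (rule part1[where a = "\<lambda>w. v0 1 (X w)" and b = "\<lambda>w. v0 0 (X w)"
          and c = "\<lambda>w. (m0 1 (X w) - m0 0 (X w) - theta_ATE M Y)\<^sup>2" and E = "\<lambda>t w. e t (X w)"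
          and \<gamma> = \<gamma>])
      show "finite {1..T}" by simp
      show "\<And>t. t \<in> {1..T} \<Longrightarrow> 0 < \<kappa> t" using assms(6) by simp
      show "sum \<kappa> {1..T} = 1" by (rule assms(7))
      show "AE w in M. 0 \<le> v0 1 (X w)" by (rule vnn) simp
      show "AE w in M. 0 \<le> v0 0 (X w)" by (rule vnn) simp
      show "\<And>w. 0 \<le> (m0 1 (X w) - m0 0 (X w) - theta_ATE M Y)\<^sup>2" by simp
      show "0 < \<gamma>" by (rule g)
      show "\<And>t w. t \<in> {1..T} \<Longrightarrow> \<gamma> \<le> e t (X w) \<and> e t (X w) \<le> 1 - \<gamma>"
        using F unfolding Fgam_def by blast
      show "\<And>t. t \<in> {1..T} \<Longrightarrow> 0 < (\<integral>w. v0 1 (X w) / e t (X w) + v0 0 (X w) / (1 - e t (X w))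
          + (m0 1 (X w) - m0 0 (X w) - theta_ATE M Y)\<^sup>2 \<partial>M)"
        using V unfolding V_AIPW_def by blast
    qed
  qed
  have EPL: "EPL_info M X v0 \<psi> e' = (\<integral>w. gH (v0 1 (X w)) (v0 0 (X w)) (e' (X w)) *\<^sub>R outer (\<psi> (X w)) \<partial>M)"
    for e' unfolding EPL_info_def gH_def by simp
  have part_ii: "psd_le (V_EPL M X v0 \<psi> e0)
                   (matrix_inv (\<Sum>t\<in>{1..T}. \<kappa> t *\<^sub>R EPL_info M X v0 \<psi> (e t)))"
    if H: "(\<forall>x. norm (\<psi> x) \<le> C)
        \<and> c > 0 \<and> (\<forall>z\<in>{0, 1}. \<forall>x. c \<le> v0 z x)
        \<and> cond_exp_version M X (\<lambda>w. Y 1 w - Y 0 w) (\<lambda>x. \<psi> x \<bullet> \<theta>)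
        \<and> (\<forall>t\<in>{1..T}. e t \<in> Fgam 0)
        \<and> pos_def_mat (\<integral>w. ((e0 (X w))\<^sup>2 * (1 - e0 (X w))\<^sup>2) *\<^sub>R outer (\<psi> (X w)) \<partial>M)
        \<and> invertible (\<Sum>t\<in>{1..T}. \<kappa> t *\<^sub>R EPL_info M X v0 \<psi> (e t))" for c and \<theta> :: "real^'p"
  proof -
    have v1m: "v0 1 \<in> borel_measurable borel" using assms(9)[of 1] unfolding cond_exp_version_def by simp
    have v0m: "v0 0 \<in> borel_measurable borel" using assms(9)[of 0] unfolding cond_exp_version_def by simp
    have em: "t \<in> {1..T} \<Longrightarrow> e t \<in> borel_measurable borel" for t using H unfolding Fgam_def by blast
    show ?thesis unfolding V_EPL_def EPL e0_def
    proof (rule part2[where E = "\<lambda>t w. e t (X w)" and P = "\<lambda>w. \<psi> (X w)" and C = C and c = c])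
      show "prob_space M" by (rule assms(2))
      show "finite {1..T}" by simp
      show "\<And>t. t \<in> {1..T} \<Longrightarrow> 0 < \<kappa> t" using assms(6) by simp
      show "sum \<kappa> {1..T} = 1" by (rule assms(7))
      show "(\<lambda>w. v0 1 (X w)) \<in> borel_measurable M" using v1m Xm by (rule measurable_compose[rotated])
      show "(\<lambda>w. v0 0 (X w)) \<in> borel_measurable M" using v0m Xm by (rule measurable_compose[rotated])
      show "\<And>t. t \<in> {1..T} \<Longrightarrow> (\<lambda>w. e t (X w)) \<in> borel_measurable M"
        using em Xm by (metis measurable_compose)
      show "0 < c" using H by blast
      show "\<And>w. c \<le> v0 1 (X w)" using H by blast
      show "\<And>w. c \<le> v0 0 (X w)" using H by blast
      show "\<And>t w. t \<in> {1..T} \<Longrightarrow> 0 \<le> e t (X w) \<and> e t (X w) \<le> 1"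
        using H unfolding Fgam_def by simp
      show "\<And>w. norm (\<psi> (X w)) \<le> C" using H by blast
      show "pos_def_mat (\<integral>w. ((\<Sum>t\<in>{1..T}. \<kappa> t * e t (X w))\<^sup>2 * (1 - (\<Sum>t\<in>{1..T}. \<kappa> t * e t (X w)))\<^sup>2) *\<^sub>R outer (\<psi> (X w)) \<partial>M)"
        using H unfolding e0_def by blast
      show "invertible (\<Sum>t\<in>{1..T}. \<kappa> t *\<^sub>R (\<integral>w. gH (v0 1 (X w)) (v0 0 (X w)) (e t (X w)) *\<^sub>R outer (\<psi> (X w)) \<partial>M))"
        using H unfolding EPL by blast
    qed
  qed
  show ?thesis using part_i part_ii by blast
qed

end
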